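(* Let $m,n\ge1$, let $a_1,\dots,a_n\in\mathbb{C}$ be distinct, let $m_1,\dots,m_n\ge 1$ be integers, let $c_0,\dots,c_{m-1},b_k^{(j)}\in\mathbb{C}$, and let $$r(\lambda)=\lambda^m-c_{m-1}\lambda^{m-1}-\cdots-c_1\lambda-c_0-\sum_{j=1}^n\sum_{k=1}^{m_j}\frac{b_k^{(j)}}{(\lambda-a_j)^k}.$$ If $\lambda_0$ is a zero of $r$, then (1) $|\lambda_0|\le \max_{1\le j\le n}\Big\{1+|a_j|,\ \sum_{j=1}^n\sum_{k=1}^{m_j}|b_k^{(j)}|+\sum_{i=0}^{m-1}|c_i|\Big\}$; (2) if every $m_j=1$ (writing $b^{(j)}=b^{(j)}_1$), then $|\lambda_0|\le\max_{1\le j\le n,\,1\le i\le m-1}\{|a_j|+|b^{(j)}|,\ 1+|c_i|,\ |c_0|+n\}$; otherwise $|\lambda_0|\le \max_{1\le j\le n,\,1\le k\le m_j,\,1\le i\le m-1}\Big\{|a_j|+|b_k^{(j)}|,\ 1+|a_j|,\ 1+|c_i|,\ |c_0|+\sum_{j=1}^n m_j\Big\}$.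
   Context: A zero of $r$ is a $\lambda_0\in\mathbb{C}\setminus\{a_1,\dots,a_n\}$ with $r(\lambda_0)=0$. *)

theory Defs
  imports "HOL-Analysis.Analysis"
begin

definition rfun :: "nat \<Rightarrow> (nat \<Rightarrow> complex) \<Rightarrow> nat \<Rightarrow> (nat \<Rightarrow> complex) \<Rightarrow> (nat \<Rightarrow> nat)
    \<Rightarrow> (nat \<Rightarrow> nat \<Rightarrow> complex) \<Rightarrow> complex \<Rightarrow> complex" where
  "rfun m c n a mj b l =
     l ^ m - (\<Sum>i<m. c i * l ^ i)
       - (\<Sum>j=1..n. \<Sum>k=1..mj j. b j k / (l - a j) ^ k)"

end

theory Submission
  imports Defs
begin

lemma telescope:
  fixes L :: real and c :: "nat \<Rightarrow> complex"
  assumes "m \<ge> 1" "L \<ge> 0" "\<forall>i\<in>{1..m-1}. 1 + norm (c i) \<le> L"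
  shows "(\<Sum>i<m. norm (c i) * L ^ i) \<le> norm (c 0) - L + L ^ m"
  using assms
proof (induction m rule: nat_induct_at_least)
  case base then show ?case by simp
next
  case (Suc k)
  have "\<forall>i\<in>{1..k-1}. 1 + norm (c i) \<le> L" using Suc.prems by auto
  hence "(\<Sum>i<k. norm (c i) * L ^ i) \<le> norm (c 0) - L + L ^ k"
    using Suc.IH Suc.prems by blast
  moreover have "k \<in> {1..Suc k - 1}" using Suc.hyps by simp
  hence "1 + norm (c k) \<le> L" using Suc.prems(2) by blast
  hence "norm (c k) \<le> L - 1" by simp
  hence "norm (c k) * L ^ k \<le> (L - 1) * L ^ k"
    using Suc by (intro mult_right_mono) auto
  ultimately show ?case by (simp add: algebra_simps)
qed

lemma sum_bound_strict:
  fixes f :: "nat \<Rightarrow> nat \<Rightarrow> real"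
  assumes "n \<ge> 1" "\<forall>j\<in>{1..n}. mj j \<ge> 1"
    "\<forall>j\<in>{1..n}. \<forall>k\<in>{1..mj j}. f j k < 1"
  shows "(\<Sum>j=1..n. \<Sum>k=1..mj j. f j k) < real (\<Sum>j=1..n. mj j)"
proof -
  have "(\<Sum>j=1..n. \<Sum>k=1..mj j. f j k) < (\<Sum>j=1..n. \<Sum>k=1..mj j. (1::real))"
  proof (rule sum_strict_mono)
    fix j assume j: "j \<in> {1..n}"
    show "(\<Sum>k=1..mj j. f j k) < (\<Sum>k=1..mj j. (1::real))"
      using j assms by (intro sum_strict_mono) auto
  qed (use assms in auto)
  thus ?thesis by simp
qed

lemma main_contra:
  fixes L N :: real and c :: "nat \<Rightarrow> complex" and R l0 :: complex
  assumes "m \<ge> 1" "L = norm l0"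
    "l0 ^ m = (\<Sum>i<m. c i * l0 ^ i) + R"
    "norm R < N"
    "\<forall>i\<in>{1..m-1}. 1 + norm (c i) \<le> L"
    "norm (c 0) + N \<le> L"
  shows False
proof -
  have "L ^ m = norm (l0 ^ m)" unfolding assms(2) by (rule norm_power[symmetric])
  also have "\<dots> \<le> norm (\<Sum>i<m. c i * l0 ^ i) + norm R"
    using assms(3) norm_triangle_ineq by metis
  also have "norm (\<Sum>i<m. c i * l0 ^ i) \<le> (\<Sum>i<m. norm (c i) * L ^ i)"
    using norm_sum[of "\<lambda>i. c i * l0 ^ i"] assms(2) by (simp add: norm_mult norm_power)
  also have "\<dots> \<le> norm (c 0) - L + L ^ m"
    using telescope[of m L c] assms by auto
  finally show False using assms by auto
qed

theorem theorem3p3: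
  fixes m n :: nat and a :: "nat \<Rightarrow> complex" and mj :: "nat \<Rightarrow> nat"
    and c :: "nat \<Rightarrow> complex" and b :: "nat \<Rightarrow> nat \<Rightarrow> complex" and l0 :: complex
  assumes "m \<ge> 1" and "n \<ge> 1"
    and "inj_on a {1..n}"
    and "\<forall>j\<in>{1..n}. mj j \<ge> 1"
    and "l0 \<notin> a ` {1..n}"
    and "rfun m c n a mj b l0 = 0"
  shows "norm l0 \<le> max (Max ((\<lambda>j. 1 + norm (a j)) ` {1..n}))
                        ((\<Sum>j=1..n. \<Sum>k=1..mj j. norm (b j k)) + (\<Sum>i<m. norm (c i)))
       \<and> ((\<forall>j\<in>{1..n}. mj j = 1) \<longrightarrow>
           norm l0 \<le> Max ((\<lambda>j. norm (a j) + norm (b j 1)) ` {1..n}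
                          \<union> (\<lambda>i. 1 + norm (c i)) ` {1..m-1}
                          \<union> {norm (c 0) + real n}))
       \<and> (\<not> (\<forall>j\<in>{1..n}. mj j = 1) \<longrightarrow>
           norm l0 \<le> Max ((\<lambda>(j,k). norm (a j) + norm (b j k)) ` (SIGMA j:{1..n}. {1..mj j})
                          \<union> (\<lambda>j. 1 + norm (a j)) ` {1..n}
                          \<union> (\<lambda>i. 1 + norm (c i)) ` {1..m-1}
                          \<union> {norm (c 0) + real (\<Sum>j=1..n. mj j)}))"
proof -
  define L where "L = norm l0"
  define R where "R = (\<Sum>j=1..n. \<Sum>k=1..mj j. b j k / (l0 - a j) ^ k)"
  have eq: "l0 ^ m = (\<Sum>i<m. c i * l0 ^ i) + R"
    using assms(6) unfolding rfun_def R_def by (simp add: algebra_simps)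
  have dpos: "norm (l0 - a j) > 0" if "j \<in> {1..n}" for j
    using assms(5) that by auto
  have dge: "norm (l0 - a j) \<ge> L - norm (a j)" for j
    unfolding L_def using norm_triangle_ineq2[of l0 "a j"] by simp
  have normR: "norm R \<le> (\<Sum>j=1..n. \<Sum>k=1..mj j. norm (b j k) / norm (l0 - a j) ^ k)"
    unfolding R_def
    by (rule order_trans[OF norm_sum sum_mono], rule order_trans[OF norm_sum],
        simp add: norm_divide norm_power)
  have ne: "{1..n} \<noteq> {}" using assms(2) by auto
  have fin: "finite (SIGMA j:{1..n}. {1..mj j})" by auto
  have gen: False if
    t: "\<forall>j\<in>{1..n}. \<forall>k\<in>{1..mj j}. norm (b j k) / norm (l0 - a j) ^ k < 1"
    and ci: "\<forall>i\<in>{1..m-1}. 1 + norm (c i) \<le> L"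
    and c0: "norm (c 0) + real (\<Sum>j=1..n. mj j) \<le> L"
  proof -
    have "norm R < real (\<Sum>j=1..n. mj j)"
      using normR sum_bound_strict[OF assms(2) assms(4) t] by linarith
    thus False using main_contra[OF assms(1) L_def eq _ ci c0] by blast
  qed
  have P1: "L \<le> max (Max ((\<lambda>j. 1 + norm (a j)) ` {1..n}))
                        ((\<Sum>j=1..n. \<Sum>k=1..mj j. norm (b j k)) + (\<Sum>i<m. norm (c i)))"
  proof (rule ccontr)
    assume "\<not> ?thesis"
    hence h0: "Max ((\<lambda>j. 1 + norm (a j)) ` {1..n}) < L"
      and h2: "(\<Sum>j=1..n. \<Sum>k=1..mj j. norm (b j k)) + (\<Sum>i<m. norm (c i)) < L"
      by auto
    have h1: "\<forall>j\<in>{1..n}. 1 + norm (a j) < L"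
      using h0 ne by (subst (asm) Max_less_iff) auto
    have "1 + norm (a 1) < L" using h1 assms(2) by auto
    hence L1: "L > 1" using norm_ge_zero[of "a 1"] by linarith
    have d1: "norm (l0 - a j) \<ge> 1" if "j \<in> {1..n}" for j
      using h1 dge[of j] that by force
    have normRB: "norm R \<le> (\<Sum>j=1..n. \<Sum>k=1..mj j. norm (b j k))"
    proof (rule order_trans[OF normR], rule sum_mono, rule sum_mono)
      fix j k assume j: "j \<in> {1..n}" and k: "k \<in> {1..mj j}"
      have "1 \<le> norm (l0 - a j) ^ k" using d1[OF j] by (simp add: one_le_power)
      thus "norm (b j k) / norm (l0 - a j) ^ k \<le> norm (b j k)"
        using divide_left_mono[of 1 "norm (l0 - a j) ^ k" "norm (b j k)"] by simp
    qed
    define B where "B = (\<Sum>j=1..n. \<Sum>k=1..mj j. norm (b j k))"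
    have B0: "B \<ge> 0" unfolding B_def by (intro sum_nonneg) auto
    have e1: "L ^ m = norm (l0 ^ m)" unfolding L_def by (rule norm_power[symmetric])
    have e2: "norm (l0 ^ m) \<le> norm (\<Sum>i<m. c i * l0 ^ i) + norm R"
      unfolding eq by (rule norm_triangle_ineq)
    have e3: "norm (\<Sum>i<m. c i * l0 ^ i) \<le> (\<Sum>i<m. norm (c i) * L ^ i)"
      using norm_sum[of "\<lambda>i. c i * l0 ^ i" "{..<m}"] unfolding L_def by (simp add: norm_mult norm_power)
    have e4: "(\<Sum>i<m. norm (c i) * L ^ i) \<le> (\<Sum>i<m. norm (c i) * L ^ (m-1))"
      using L1 by (intro sum_mono mult_left_mono power_increasing) auto
    have e5: "norm R \<le> B" using normRB B_def by simp
    have e6: "B \<le> B * L ^ (m-1)" using B0 L1 by (simp add: mult_le_cancel_left1 one_le_power)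
    have e7: "(\<Sum>i<m. norm (c i) * L ^ (m-1)) = (\<Sum>i<m. norm (c i)) * L ^ (m-1)"
      by (rule sum_distrib_right[symmetric])
    have e8: "(B + (\<Sum>i<m. norm (c i))) * L ^ (m-1) < L * L ^ (m-1)"
      using h2 L1 B_def by (intro mult_strict_right_mono) auto
    have e9: "L * L ^ (m-1) = L ^ m" using assms(1) by (metis Suc_diff_le diff_Suc_1 power_Suc)
    have e10: "(B + (\<Sum>i<m. norm (c i))) * L ^ (m-1) = B * L ^ (m-1) + (\<Sum>i<m. norm (c i)) * L ^ (m-1)"
      by (rule distrib_right)
    show False using e1 e2 e3 e4 e5 e6 e7 e8 e9 e10 by linarith
  qed
  have P2: "(\<forall>j\<in>{1..n}. mj j = 1) \<longrightarrow>
           L \<le> Max ((\<lambda>j. norm (a j) + norm (b j 1)) ` {1..n}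
                          \<union> (\<lambda>i. 1 + norm (c i)) ` {1..m-1}
                          \<union> {norm (c 0) + real n})"
  proof (rule impI, rule ccontr)
    assume all1: "\<forall>j\<in>{1..n}. mj j = 1"
    assume "\<not> L \<le> Max ((\<lambda>j. norm (a j) + norm (b j 1)) ` {1..n}
                          \<union> (\<lambda>i. 1 + norm (c i)) ` {1..m-1}
                          \<union> {norm (c 0) + real n})"
    hence "\<forall>x\<in>((\<lambda>j. norm (a j) + norm (b j 1)) ` {1..n}
                          \<union> (\<lambda>i. 1 + norm (c i)) ` {1..m-1}
                          \<union> {norm (c 0) + real n}). x < L"
      by (subst (asm) not_le, subst (asm) Max_less_iff) (simp_all add: finite_imageI)
    hence h: "\<forall>j\<in>{1..n}. norm (a j) + norm (b j 1) < L"
      "\<forall>i\<in>{1..m-1}. 1 + norm (c i) < L" "norm (c 0) + real n < L"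
      by blast+
    have sn: "(\<Sum>j=1..n. mj j) = n" using all1 by simp
    show False
    proof (rule gen)
      show "\<forall>j\<in>{1..n}. \<forall>k\<in>{1..mj j}. norm (b j k) / norm (l0 - a j) ^ k < 1"
      proof (intro ballI)
        fix j k assume j: "j \<in> {1..n}" and k: "k \<in> {1..mj j}"
        have "k = 1" using k all1 j by auto
        moreover have "norm (a j) + norm (b j 1) < L" using h(1) j by blast
        moreover note dge[of j]
        ultimately have "k = 1" "norm (b j 1) < norm (l0 - a j)" by linarith+
        thus "norm (b j k) / norm (l0 - a j) ^ k < 1" using dpos[OF j] by simp
      qed
    next
      show "\<forall>i\<in>{1..m-1}. 1 + norm (c i) \<le> L" using h(2) less_imp_le by blast
    next
      have "real (\<Sum>j=1..n. mj j) = real n" using sn by (rule arg_cong)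
      thus "norm (c 0) + real (\<Sum>j=1..n. mj j) \<le> L" using h(3) by linarith
    qed
  qed
  have P3: "\<not> (\<forall>j\<in>{1..n}. mj j = 1) \<longrightarrow>
           L \<le> Max ((\<lambda>(j,k). norm (a j) + norm (b j k)) ` (SIGMA j:{1..n}. {1..mj j})
                          \<union> (\<lambda>j. 1 + norm (a j)) ` {1..n}
                          \<union> (\<lambda>i. 1 + norm (c i)) ` {1..m-1}
                          \<union> {norm (c 0) + real (\<Sum>j=1..n. mj j)})"
  proof (rule impI, rule ccontr)
    assume "\<not> L \<le> Max ((\<lambda>(j,k). norm (a j) + norm (b j k)) ` (SIGMA j:{1..n}. {1..mj j})
                          \<union> (\<lambda>j. 1 + norm (a j)) ` {1..n}
                          \<union> (\<lambda>i. 1 + norm (c i)) ` {1..m-1}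
                          \<union> {norm (c 0) + real (\<Sum>j=1..n. mj j)})"
    hence hh: "\<forall>x\<in>((\<lambda>(j,k). norm (a j) + norm (b j k)) ` (SIGMA j:{1..n}. {1..mj j})
                          \<union> (\<lambda>j. 1 + norm (a j)) ` {1..n}
                          \<union> (\<lambda>i. 1 + norm (c i)) ` {1..m-1}
                          \<union> {norm (c 0) + real (\<Sum>j=1..n. mj j)}). x < L"
      using fin by (subst (asm) not_le, subst (asm) Max_less_iff) (simp_all add: finite_imageI)
    have h1: "\<forall>j\<in>{1..n}. \<forall>k\<in>{1..mj j}. norm (a j) + norm (b j k) < L"
    proof (intro ballI)
      fix j k assume "j \<in> {1..n}" "k \<in> {1..mj j}"
      hence "(j,k) \<in> (SIGMA j:{1..n}. {1..mj j})" by blast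
      hence "norm (a j) + norm (b j k) \<in> (\<lambda>(j,k). norm (a j) + norm (b j k)) ` (SIGMA j:{1..n}. {1..mj j})"
        by (metis (mono_tags, lifting) case_prod_conv image_eqI)
      thus "norm (a j) + norm (b j k) < L" using hh by blast
    qed
    have h: "\<forall>j\<in>{1..n}. \<forall>k\<in>{1..mj j}. norm (a j) + norm (b j k) < L"
      "\<forall>j\<in>{1..n}. 1 + norm (a j) < L"
      "\<forall>i\<in>{1..m-1}. 1 + norm (c i) < L" "norm (c 0) + real (\<Sum>j=1..n. mj j) < L"
      using h1 hh by blast+
    show False
    proof (rule gen)
      show "\<forall>j\<in>{1..n}. \<forall>k\<in>{1..mj j}. norm (b j k) / norm (l0 - a j) ^ k < 1"
      proof (intro ballI)
        fix j k assume j: "j \<in> {1..n}" and k: "k \<in> {1..mj j}"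
        define d where "d = norm (l0 - a j)"
        have "1 + norm (a j) < L" using h(2) j by blast
        hence d1: "d > 1" using dge[of j] unfolding d_def by linarith
        have "norm (a j) + norm (b j k) < L" using h(1) j k by blast
        hence db: "norm (b j k) < d" using dge[of j] unfolding d_def by linarith
        have "d \<le> d ^ k" using d1 k by (metis atLeastAtMost_iff less_imp_le power_increasing power_one_right)
        hence "norm (b j k) < d ^ k" using db by linarith
        thus "norm (b j k) / norm (l0 - a j) ^ k < 1" using d1 by (simp add: d_def[symmetric])
      qed
    next
      show "\<forall>i\<in>{1..m-1}. 1 + norm (c i) \<le> L" using h(3) less_imp_le by blast
    next
      show "norm (c 0) + real (\<Sum>j=1..n. mj j) \<le> L" using h(4) by linarith
    qed
  qed
  show ?thesis using P1 P2 P3 L_def by simp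
qed

end
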